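(* In the situation described in the context: (1) for each $r\in[1,\sigma]$, $V=X_r\oplus X_r^\perp$. (2) Assume moreover that $g$ is unipotent and put $N=g-1$, $p_{\sigma+1}=\kappa/2$, and $\Lambda_k=\sum_{r\in[1,\sigma+1]}\max(2p_r-k,0)$ for $k\ge 0$. Then $\dim N^kV\ge\Lambda_k$ for every $k\ge0$, with equality for $k=0$. (3) If $\dim N^kV=\Lambda_k$ for all $k\ge0$, then each $X_r$ ($r\in[1,\sigma+1]$) is $g$-stable and $(X_r,X_{r'})=0$ for all $r\ne r'$ in $[1,\sigma+1]$.
   Context: Let $\mathbf k$ be algebraically closed of characteristic $p$. Let $V$ be a $\mathbf k$-vector space of dimension $\mathfrak n\ge3$, $\kappa\in\{0,1\}$ with $\kappa\equiv\mathfrak n\pmod2$, $n=(\mathfrak n-\kappa)/2$, with a bilinear form $(\,,)$ and quadratic form $Q$ such that either (i) $Q=0$, $(x,x)=0$ for all $x$, $V^\perp=0$; or (ii) $Q\neq0$, $(x,y)=Q(x+y)-Q(x)-Q(y)$, $Q|_{V^\perp}$ injective. $Is(V)$ is the group of $g\in GL(V)$ preserving $(\,,)$ and $Q$. $\mathcal F$ is the set of flags $V_*=(0=V_0\subset\dots\subset V_{\mathfrak n}=V)$, $\dim V_i=i$, with $Q|_{V_i}=0$ and $V_i^\perp=V_{\mathfrak n-i}$ for $i\in[0,n]$. For $V_*,V'_*\in\mathcal F$, $a_{V_*,V'_*}$ is the permutation $i\mapsto a_i$ of $[1,\mathfrak n]$ where $X_i=\{j: V'_i\cap V_j\ne V'_i\cap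 V_{j-1}\}$ and $X_i=X_{i-1}\sqcup\{a_i\}$. For $p_*=(p_1\ge\dots\ge p_\sigma)$, integers $\ge1$ with sum $n$, $p_{<r}=\sum_{r'<r}p_{r'}$, $p_{\le r}=\sum_{r'\le r}p_{r'}$, and $w_{p_*}$ is the permutation with cycles $p_{<r}+1\mapsto\dots\mapsto p_{\le r}\mapsto\mathfrak n-p_{<r}\mapsto\dots\mapsto\mathfrak n-p_{\le r}+1\mapsto p_{<r}+1$ ($r\in[1,\sigma]$), fixing $n+1$ if $\kappa=1$. Situation: $V_*,V'_*\in\mathcal F$ with $a_{V_*,V'_*}=w_{p_*}$, $g\in Is(V)$ with $gV_*=V'_*$, and $v_1,\dots,v_\sigma\in V$ (and $v_{\sigma+1}$ if $\kappa=1$) such that, writing $Z_k$ for the span of $v_k,gv_k,\dots,g^{p_k-1}v_k$: $V_{p_{<r}+i}=Z_1+\dots+Z_{r-1}+\mathrm{span}(v_r,\dots,g^{i-1}v_r)$ for $i\in[0,p_r]$; $(g^iv_t,v_r)=0$ for $t<r\le\sigma$, $i\in[-p_t,p_t-1]$; $(v_r,g^iv_r)=0$ for $|i|\le p_r-1$, $Q(v_r)=0$, $(v_r,g^{p_r}v_r)=1$; and, if $\kappa=1$, $(g^iv_t,v_{\sigma+1})=0$ for $t\in[1,\sigma]$, $i\in[-p_t,p_t-1]$ and $Q(v_{\sigma+1})=1$. (Such vectors exist and the vectors $g^jv_t$, $t\in[1,\sigma]$, $j\in[-p_t,p_t-1]$, together with $v_{\sigma+1}$ if $\kappa=1$, form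 a basis of $V$.) For $r\in[1,\sigma]$, $X_r$ is the span of $g^{-p_r+i}v_r$, $i\in[0,2p_r-1]$; $X_{\sigma+1}=0$ if $\kappa=0$ and $X_{\sigma+1}=\mathbf k v_{\sigma+1}$ if $\kappa=1$. *)

theory Defs
  imports "HOL-Computational_Algebra.Polynomial"
begin

definition perp :: "('v \<Rightarrow> 'v \<Rightarrow> 'k::field) \<Rightarrow> 'v set \<Rightarrow> 'v set" where
  "perp B S = {x. \<forall>y\<in>S. B x y = 0}"

definition form_conditions ::
  "('k::field \<Rightarrow> 'v::ab_group_add \<Rightarrow> 'v) \<Rightarrow> ('v \<Rightarrow> 'v \<Rightarrow> 'k) \<Rightarrow> ('v \<Rightarrow> 'k) \<Rightarrow> bool" where
  "form_conditions scale B Q \<longleftrightarrow>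
     (\<forall>x y z. B (x + y) z = B x z + B y z) \<and>
     (\<forall>x y z. B x (y + z) = B x y + B x z) \<and>
     (\<forall>c x y. B (scale c x) y = c * B x y) \<and>
     (\<forall>c x y. B x (scale c y) = c * B x y) \<and>
     (\<forall>c x. Q (scale c x) = c ^ 2 * Q x) \<and>
     ( ((\<forall>x. Q x = 0) \<and> (\<forall>x. B x x = 0) \<and> perp B UNIV = {0})
     \<or> ((\<exists>x. Q x \<noteq> 0) \<and> (\<forall>x y. B x y = Q (x + y) - Q x - Q y) \<and> inj_on Q (perp B UNIV)))"

definition isometry ::
  "('k::field \<Rightarrow> 'v::ab_group_add \<Rightarrow> 'v) \<Rightarrow> ('v \<Rightarrow> 'v \<Rightarrow> 'k) \<Rightarrow> ('v \<Rightarrow> 'k) \<Rightarrow> ('v \<Rightarrow> 'v) \<Rightarrow> bool" where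
  "isometry scale B Q g \<longleftrightarrow> Vector_Spaces.linear scale scale g \<and> bij g \<and>
     (\<forall>x y. B (g x) (g y) = B x y) \<and> (\<forall>x. Q (g x) = Q x)"

definition is_flag ::
  "('k::field \<Rightarrow> 'v::ab_group_add \<Rightarrow> 'v) \<Rightarrow> ('v \<Rightarrow> 'v \<Rightarrow> 'k) \<Rightarrow> ('v \<Rightarrow> 'k) \<Rightarrow> nat \<Rightarrow> (nat \<Rightarrow> 'v set) \<Rightarrow> bool" where
  "is_flag scale B Q nn V \<longleftrightarrow>
     (\<forall>i\<le>nn. module.subspace scale (V i) \<and> vector_space.dim scale (V i) = i) \<and>
     (\<forall>i<nn. V i \<subseteq> V (Suc i)) \<and> V 0 = {0} \<and> V nn = UNIV \<and>
     (\<forall>i\<le>nn div 2. (\<forall>x\<in>V i. Q x = 0) \<and> perp B (V i) = V (nn - i))"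

definition relX :: "nat \<Rightarrow> (nat \<Rightarrow> 'v set) \<Rightarrow> (nat \<Rightarrow> 'v set) \<Rightarrow> nat \<Rightarrow> nat set" where
  "relX nn V V' i = {j\<in>{1..nn}. V' i \<inter> V j \<noteq> V' i \<inter> V (j - 1)}"

text \<open>a_{V,V'} = a : X_i = X_{i-1} disjoint-union {a_i} for all i in [1,nn].\<close>
definition rel_pos_eq :: "nat \<Rightarrow> (nat \<Rightarrow> 'v set) \<Rightarrow> (nat \<Rightarrow> 'v set) \<Rightarrow> (nat \<Rightarrow> nat) \<Rightarrow> bool" where
  "rel_pos_eq nn V V' a \<longleftrightarrow>
     (\<forall>i\<in>{1..nn}. a i \<notin> relX nn V V' (i - 1) \<and> relX nn V V' i = insert (a i) (relX nn V V' (i - 1)))"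

definition plt :: "(nat \<Rightarrow> nat) \<Rightarrow> nat \<Rightarrow> nat" where
  "plt p r = (\<Sum>r'\<in>{1..<r}. p r')"
definition ple :: "(nat \<Rightarrow> nat) \<Rightarrow> nat \<Rightarrow> nat" where
  "ple p r = (\<Sum>r'\<in>{1..r}. p r')"

text \<open>For 1 \<le> i \<le> n, the unique r with p_{<r} < i \<le> p_{\<le>r}.\<close>
definition cyc :: "(nat \<Rightarrow> nat) \<Rightarrow> nat \<Rightarrow> nat" where
  "cyc p i = (LEAST r. i \<le> ple p r)"

definition wperm :: "nat \<Rightarrow> (nat \<Rightarrow> nat) \<Rightarrow> nat \<Rightarrow> nat" where
  "wperm nn p i =
     (if 1 \<le> i \<and> i \<le> nn div 2 then
        (let r = cyc p i in if i < ple p r then i + 1 else nn - plt p r)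
      else if nn - nn div 2 < i \<and> i \<le> nn then
        (let j = nn + 1 - i; r = cyc p j in if j = ple p r then plt p r + 1 else i - 1)
      else i)"

definition gpow :: "('v \<Rightarrow> 'v) \<Rightarrow> int \<Rightarrow> 'v \<Rightarrow> 'v" where
  "gpow g i = (if 0 \<le> i then g ^^ nat i else inv g ^^ nat (- i))"

definition Xsp :: "('k::field \<Rightarrow> 'v::ab_group_add \<Rightarrow> 'v) \<Rightarrow> ('v \<Rightarrow> 'v) \<Rightarrow> (nat \<Rightarrow> 'v) \<Rightarrow>
    (nat \<Rightarrow> nat) \<Rightarrow> nat \<Rightarrow> nat \<Rightarrow> nat \<Rightarrow> 'v set" where
  "Xsp scale g v p \<sigma> \<kappa> r =
     (if r \<le> \<sigma> then module.span scale {gpow g (i - int (p r)) (v r) | i. 0 \<le> i \<and> i \<le> 2 * int (p r) - 1}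
      else if \<kappa> = 0 then {0} else {scale c (v (\<sigma> + 1)) | c. True})"

definition unipotent :: "('v::ab_group_add \<Rightarrow> 'v) \<Rightarrow> bool" where
  "unipotent g \<longleftrightarrow> (\<exists>m. \<forall>x. ((\<lambda>y. g y - y) ^^ m) x = 0)"

text \<open>Lambda_k = sum_{r in [1,sigma+1]} max(2 p_r - k, 0) with 2 p_{sigma+1} = kappa
  (natural-number truncated subtraction implements max(_,0)).\<close>
definition Lam :: "(nat \<Rightarrow> nat) \<Rightarrow> nat \<Rightarrow> nat \<Rightarrow> nat \<Rightarrow> nat" where
  "Lam p \<sigma> \<kappa> k = (\<Sum>r\<in>{1..\<sigma>}. 2 * p r - k) + (\<kappa> - k)"

end

theory Submission
  imports Defs
begin


lemma lex_key:
  fixes a b c d m :: nat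
  assumes "c * m + d \<le> a * m + b" "b < m" "d < m"
  shows "c \<le> a \<and> (c = a \<longrightarrow> d \<le> b)"
proof -
  have "c \<le> a"
  proof (rule ccontr)
    assume "\<not> c \<le> a"
    then have "Suc a \<le> c" by simp
    then have "Suc a * m \<le> c * m" by (rule mult_le_mono1)
    then show False using assms by simp
  qed
  then show ?thesis using assms by auto
qed

lemma tri_zero:
  fixes M :: "'i \<Rightarrow> 'i \<Rightarrow> 'k::field" and key :: "'i \<Rightarrow> nat"
  assumes fin: "finite I"
    and diag: "\<And>j. j \<in> I \<Longrightarrow> M j j \<noteq> 0"
    and low: "\<And>i j. i \<in> I \<Longrightarrow> j \<in> I \<Longrightarrow> i \<noteq> j \<Longrightarrow> key j \<le> key i \<Longrightarrow> M i j = 0"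
    and eqs: "\<And>j. j \<in> I \<Longrightarrow> (\<Sum>i\<in>I. c i * M i j) = 0"
  shows "\<forall>i\<in>I. c i = 0"
proof -
  have "\<forall>j\<in>I. key j = n \<longrightarrow> c j = 0" for n
  proof (induction n rule: less_induct)
    case (less n)
    show ?case
    proof (intro ballI impI)
      fix j assume j: "j \<in> I" "key j = n"
      have z: "c i * M i j = 0" if "i \<in> I - {j}" for i
      proof (cases "key i < n")
        case True then show ?thesis using less that by auto
      next
        case False then show ?thesis using low[of i j] that j by auto
      qed
      have "(\<Sum>i\<in>I. c i * M i j) = c j * M j j + (\<Sum>i\<in>I - {j}. c i * M i j)"
        using fin j by (simp add: sum.remove)
      also have "(\<Sum>i\<in>I - {j}. c i * M i j) = 0" by (rule sum.neutral) (use z in blast)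
      finally show "c j = 0" using eqs[OF j(1)] diag[OF j(1)] by simp
    qed
  qed
  then show ?thesis by blast
qed

context module begin

lemma span_image_repr:
  assumes "finite I" "x \<in> span (f ` I)"
  shows "\<exists>c. x = (\<Sum>i\<in>I. c i *s f i)"
  using assms(2)
proof (induction rule: span_induct_alt)
  case base
  show ?case by (rule exI[of _ "\<lambda>_. 0"]) simp
next
  case (step a x y)
  from step obtain c where c: "y = (\<Sum>i\<in>I. c i *s f i)" by blast
  from step obtain i0 where i0: "i0 \<in> I" "x = f i0" by blast
  let ?c = "\<lambda>i. c i + (if i = i0 then a else 0)"
  have "(\<Sum>i\<in>I. ?c i *s f i) = (\<Sum>i\<in>I. c i *s f i) + (\<Sum>i\<in>I. (if i = i0 then a else 0) *s f i)"
    by (simp add: scale_left_distrib sum.distrib)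
  also have "(\<Sum>i\<in>I. (if i = i0 then a else 0) *s f i) = (\<Sum>i\<in>I. (if i = i0 then a *s f i0 else 0))"
    by (rule sum.cong) auto
  also have "\<dots> = a *s f i0" using assms(1) i0(1) by simp
  finally show ?case using c i0 by (metis add.commute)
qed

lemma span_map:
  assumes add: "\<And>x y. h (x + y) = h x + h y" and sc: "\<And>c x. h (c *s x) = c *s h x"
    and sub: "h ` S \<subseteq> span T" and x: "x \<in> span S"
  shows "h x \<in> span T"
  using x
proof (induction rule: span_induct_alt)
  case base
  have "h 0 = h 0 + h 0" using add[of 0 0] by simp
  then have "h 0 = 0" by simp
  then show ?case by (simp add: span_zero)
next
  case (step c x y)
  then show ?case using sub by (auto simp: add sc intro!: span_add span_scale)
qed

lemma span_subset_span: "A \<subseteq> span B \<Longrightarrow> span A \<subseteq> span B"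
  by (rule span_minimal) auto

end



locale setting = fd: finite_dimensional_vector_space scale Basis
  for scale :: "'k::field \<Rightarrow> 'v::ab_group_add \<Rightarrow> 'v" and Basis :: "'v set" +
  fixes B :: "'v \<Rightarrow> 'v \<Rightarrow> 'k" and \<epsilon> :: 'k and g :: "'v \<Rightarrow> 'v" and v :: "nat \<Rightarrow> 'v"
    and p :: "nat \<Rightarrow> nat" and \<sigma> :: nat
  assumes Badd1: "\<And>x y z. B (x + y) z = B x z + B y z"
    and Badd2: "\<And>x y z. B x (y + z) = B x y + B x z"
    and Bsc1: "\<And>c x y. B (scale c x) y = c * B x y"
    and Bsc2: "\<And>c x y. B x (scale c y) = c * B x y"
    and eps: "\<epsilon> = 1 \<or> \<epsilon> = -1"
    and Bsym: "\<And>x y. B y x = \<epsilon> * B x y"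
    and glin: "Vector_Spaces.linear scale scale g"
    and gbij: "bij g"
    and giso: "\<And>x y. B (g x) (g y) = B x y"
    and p_pos: "\<And>r. r \<in> {1..\<sigma>} \<Longrightarrow> 1 \<le> p r"
    and p_mono: "\<And>r r'. r \<in> {1..\<sigma>} \<Longrightarrow> r' \<in> {1..\<sigma>} \<Longrightarrow> r \<le> r' \<Longrightarrow> p r' \<le> p r"
    and v_orth: "\<And>t r i. 1 \<le> t \<Longrightarrow> t < r \<Longrightarrow> r \<le> \<sigma> \<Longrightarrow> - int (p t) \<le> i \<Longrightarrow> i \<le> int (p t) - 1
       \<Longrightarrow> B (gpow g i (v t)) (v r) = 0"
    and v_self0: "\<And>r i. r \<in> {1..\<sigma>} \<Longrightarrow> \<bar>i\<bar> \<le> int (p r) - 1 \<Longrightarrow> B (v r) (gpow g i (v r)) = 0"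
    and v_self1: "\<And>r. r \<in> {1..\<sigma>} \<Longrightarrow> B (v r) ((g ^^ p r) (v r)) = 1"
begin

sublocale gh: module_hom scale scale g using glin by (simp add: module_hom_iff_linear)

lemma eps_nz: "\<epsilon> \<noteq> 0" using eps by auto

lemma gadd: "g (x + y) = g x + g y" by (rule gh.add)
lemma gsc: "g (scale c x) = scale c (g x)" by (rule gh.scale)

lemma g_inv: "g (inv g x) = x" using gbij by (simp add: bij_is_surj surj_f_inv_f)
lemma inv_g: "inv g (g x) = x" using gbij by (simp add: bij_is_inj)

lemma ginj: "g x = g y \<longleftrightarrow> x = y" using gbij by (metis inv_g)

lemma invadd: "inv g (x + y) = inv g x + inv g y"
  by (metis g_inv gadd ginj)
lemma invsc: "inv g (scale c x) = scale c (inv g x)"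
  by (metis g_inv gsc ginj)

lemma gpow_succ: "gpow g (i + 1) x = g (gpow g i x)"
proof (cases "0 \<le> i")
  case True
  then have "nat (i + 1) = Suc (nat i)" by simp
  then show ?thesis using True by (simp add: gpow_def)
next
  case False
  have a: "gpow g (i + 1) x = (inv g ^^ nat (- (i + 1))) x"
    using False by (cases "i + 1 = 0") (auto simp: gpow_def)
  have "nat (- i) = Suc (nat (- (i + 1)))" using False by simp
  then have b: "gpow g i x = inv g ((inv g ^^ nat (- (i + 1))) x)"
    using False by (simp add: gpow_def)
  show ?thesis using a b g_inv by simp
qed

lemma gpow_pred: "gpow g (i - 1) x = inv g (gpow g i x)"
  using gpow_succ[of "i - 1" x] inv_g by simp

lemma gpow_0[simp]: "gpow g 0 x = x" by (simp add: gpow_def)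

lemma gpow_funpow: "(g ^^ n) x = gpow g (int n) x" by (simp add: gpow_def)

lemma gpow_add: "gpow g (i + j) x = gpow g i (gpow g j x)"
proof (induction i rule: int_induct[where k = 0])
  case base then show ?case by simp
next
  case (step1 i)
  have "gpow g (i + 1 + j) x = g (gpow g (i + j) x)" using gpow_succ[of "i + j"] by (simp add: ac_simps)
  then show ?case using step1 gpow_succ by simp
next
  case (step2 i)
  have "gpow g (i - 1 + j) x = inv g (gpow g (i + j) x)" using gpow_pred[of "i + j"] by (simp add: algebra_simps)
  then show ?case using step2 gpow_pred by simp
qed

lemma gpow_cancel: "gpow g (- i) (gpow g i x) = x"
  using gpow_add[of "- i" i x] by simp

lemma inv_iso: "B (inv g x) (inv g y) = B x y"
  using giso[of "inv g x" "inv g y"] g_inv by simp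

lemma gpow_iso: "B (gpow g i x) (gpow g i y) = B x y"
proof (induction i rule: int_induct[where k = 0])
  case base then show ?case by simp
next
  case (step1 i) then show ?case by (simp add: gpow_succ giso)
next
  case (step2 i) then show ?case by (simp add: gpow_pred inv_iso)
qed

lemma gpow_addv: "gpow g i (x + y) = gpow g i x + gpow g i y"
proof (induction i rule: int_induct[where k = 0])
  case base then show ?case by simp
next
  case (step1 i) then show ?case by (simp add: gpow_succ gadd)
next
  case (step2 i) then show ?case by (simp add: gpow_pred invadd)
qed

lemma gpow_sc: "gpow g i (scale c x) = scale c (gpow g i x)"
proof (induction i rule: int_induct[where k = 0])
  case base then show ?case by simp
next
  case (step1 i) then show ?case by (simp add: gpow_succ gsc)
next
  case (step2 i) then show ?case by (simp add: gpow_pred invsc)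
qed

lemma Bpair: "B (gpow g a x) (gpow g b y) = B (gpow g (a - b) x) y"
proof -
  have "B (gpow g a x) (gpow g b y) = B (gpow g (- b) (gpow g a x)) (gpow g (- b) (gpow g b y))"
    by (simp add: gpow_iso)
  also have "\<dots> = B (gpow g (a - b) x) y" by (simp add: gpow_cancel gpow_add[symmetric])
  finally show ?thesis .
qed

lemma B0l[simp]: "B 0 y = 0" using Bsc1[of 0 0 y] by simp
lemma B0r[simp]: "B x 0 = 0" using Bsc2[of x 0 0] by simp
lemma Bneg1: "B (- x) y = - B x y" using Badd1[of x "- x" y] by (simp add: eq_neg_iff_add_eq_0 add.commute)
lemma Bneg2: "B x (- y) = - B x y" using Badd2[of x y "- y"] by (simp add: eq_neg_iff_add_eq_0 add.commute)
lemma Bdiff1: "B (x - y) z = B x z - B y z" using Badd1[of x "- y" z] Bneg1 by simp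
lemma Bdiff2: "B x (y - z) = B x y - B x z" using Badd2[of x y "- z"] Bneg2 by simp

lemma Bsum1: "B (\<Sum>i\<in>A. scale (c i) (f i)) y = (\<Sum>i\<in>A. c i * B (f i) y)"
  by (induction A rule: infinite_finite_induct) (auto simp: Badd1 Bsc1)

lemma perp_span1:
  assumes "\<And>s. s \<in> S \<Longrightarrow> B s y = 0" "x \<in> fd.span S"
  shows "B x y = 0"
  using assms(2)
  by (induction rule: fd.span_induct_alt) (auto simp: Badd1 Bsc1 assms(1))

lemma perp_span2:
  assumes "\<And>s. s \<in> S \<Longrightarrow> B y s = 0" "x \<in> fd.span S"
  shows "B y x = 0"
  using assms(2)
  by (induction rule: fd.span_induct_alt) (auto simp: Badd2 Bsc2 assms(1))

lemma Bsym0: "B x y = 0 \<longleftrightarrow> B y x = 0"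
  using Bsym[of x y] Bsym[of y x] eps_nz by auto

end



context setting begin

lemma Zlem:
  assumes t: "t \<in> {1..\<sigma>}" and r: "r \<in> {1..\<sigma>}"
    and c: "(t < r \<and> - int (p t) \<le> d \<and> d \<le> int (p t) - 1) \<or> (t = r \<and> \<bar>d\<bar> \<le> int (p t) - 1)
           \<or> (r < t \<and> - int (p r) + 1 \<le> d \<and> d \<le> int (p r))"
  shows "B (gpow g d (v t)) (v r) = 0"
proof -
  consider "t < r \<and> - int (p t) \<le> d \<and> d \<le> int (p t) - 1" | "t = r \<and> \<bar>d\<bar> \<le> int (p t) - 1"
    | "r < t \<and> - int (p r) + 1 \<le> d \<and> d \<le> int (p r)" using c by blast
  then show ?thesis
  proof cases
    case 1 then show ?thesis using v_orth[of t r d] t r by auto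
  next
    case 2
    have "B (gpow g d (v t)) (v r) = B (gpow g (-d) (gpow g d (v t))) (gpow g (-d) (v r))"
      by (simp add: gpow_iso)
    also have "\<dots> = B (v r) (gpow g (-d) (v r))" using 2 by (simp add: gpow_cancel)
    also have "\<dots> = 0" using v_self0[of r "-d"] r 2 by auto
    finally show ?thesis .
  next
    case 3
    have "B (gpow g d (v t)) (v r) = \<epsilon> * B (v r) (gpow g d (v t))" by (rule Bsym)
    also have "B (v r) (gpow g d (v t)) = B (gpow g (-d) (v r)) (gpow g (-d) (gpow g d (v t)))"
      by (simp add: gpow_iso)
    also have "\<dots> = B (gpow g (-d) (v r)) (v t)" by (simp add: gpow_cancel)
    also have "\<dots> = 0" using v_orth[of r t "-d"] r t 3 by auto
    finally show ?thesis by simp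
  qed
qed

lemma D1: assumes "r \<in> {1..\<sigma>}" shows "B (gpow g (- int (p r)) (v r)) (v r) = 1"
proof -
  have "B (gpow g (- int (p r)) (v r)) (v r)
      = B (gpow g (int (p r)) (gpow g (- int (p r)) (v r))) (gpow g (int (p r)) (v r))"
    by (simp add: gpow_iso)
  also have "\<dots> = B (v r) ((g ^^ p r) (v r))"
    using gpow_cancel[of "- int (p r)"] by (simp add: gpow_funpow)
  finally show ?thesis using v_self1[OF assms] by simp
qed

lemma D2: assumes "r \<in> {1..\<sigma>}" shows "B (gpow g (int (p r)) (v r)) (v r) = \<epsilon>"
proof -
  have "B (gpow g (int (p r)) (v r)) (v r) = \<epsilon> * B (v r) (gpow g (int (p r)) (v r))" by (rule Bsym)
  then show ?thesis using v_self1[OF assms] by (simp add: gpow_funpow)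
qed

definition e :: "nat \<Rightarrow> nat \<Rightarrow> 'v" where "e t s = gpow g (int s - int (p t)) (v t)"
definition ee :: "nat \<times> nat \<Rightarrow> 'v" where "ee j = e (fst j) (snd j)"
definition Iset :: "(nat \<times> nat) set" where "Iset = Sigma {1..\<sigma>} (\<lambda>t. {..<2 * p t})"
definition pim :: "nat \<times> nat \<Rightarrow> nat \<times> nat" where
  "pim j = (fst j, if snd j < p (fst j) then snd j + p (fst j) else snd j - p (fst j))"
definition PP :: nat where "PP = (\<Sum>t\<in>{1..\<sigma>}. p t)"
definition key :: "nat \<times> nat \<Rightarrow> nat" where
  "key j = (if snd j < p (fst j) then snd j * (\<sigma> + 1) + (\<sigma> - fst j)
            else PP * (\<sigma> + 1) + (PP - (snd j - p (fst j))) * (\<sigma> + 1) + fst j)"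

lemma Iset_fin: "finite Iset" by (simp add: Iset_def)

lemma pim_in: "j \<in> Iset \<Longrightarrow> pim j \<in> Iset" by (auto simp: Iset_def pim_def)
lemma pim_fst[simp]: "fst (pim j) = fst j" by (simp add: pim_def)

lemma p_le_PP: "t \<in> {1..\<sigma>} \<Longrightarrow> p t \<le> PP"
  unfolding PP_def by (rule member_le_sum) auto

lemma e_pim:
  assumes "j \<in> Iset"
  shows "ee (pim j) = gpow g (if snd j < p (fst j) then int (snd j) else int (snd j) - 2 * int (p (fst j))) (v (fst j))"
  using assms by (auto simp: ee_def e_def pim_def Iset_def of_nat_diff)

lemma tri_low:
  assumes i: "i \<in> Iset" and j: "j \<in> Iset" and ne: "i \<noteq> j" and k: "key j \<le> key i"
  shows "B (ee i) (ee (pim j)) = 0"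
proof -
  obtain t si where i': "i = (t, si)" by (cases i)
  obtain r sj where j': "j = (r, sj)" by (cases j)
  have t: "t \<in> {1..\<sigma>}" and si: "si < 2 * p t" using i i' by (auto simp: Iset_def)
  have r: "r \<in> {1..\<sigma>}" and sj: "sj < 2 * p r" using j j' by (auto simp: Iset_def)
  have pt: "1 \<le> p t" "p t \<le> PP" using t p_pos p_le_PP by auto
  have pr: "1 \<le> p r" "p r \<le> PP" using r p_pos p_le_PP by auto
  have m1: "t < r \<Longrightarrow> p r \<le> p t" and m2: "r < t \<Longrightarrow> p t \<le> p r" using p_mono t r by auto
  have m1': "t < r \<Longrightarrow> int (p r) \<le> int (p t)" and m2': "r < t \<Longrightarrow> int (p t) \<le> int (p r)"
    using m1 m2 by auto
  define y where "y = (if sj < p r then int sj else int sj - 2 * int (p r))"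
  have eeq: "ee (pim j) = gpow g y (v r)" using e_pim[OF j] by (simp add: j' y_def)
  have "B (ee i) (ee (pim j)) = B (gpow g (int si - int (p t) - y) (v t)) (v r)"
    by (simp only: eeq) (simp add: ee_def e_def i' Bpair)
  also have "\<dots> = 0"
  proof (rule Zlem[OF t r])
    have tr: "t \<le> \<sigma>" "1 \<le> t" "r \<le> \<sigma>" "1 \<le> r" using t r by auto
    show "(t < r \<and> - int (p t) \<le> int si - int (p t) - y \<and> int si - int (p t) - y \<le> int (p t) - 1) \<or>
          (t = r \<and> \<bar>int si - int (p t) - y\<bar> \<le> int (p t) - 1) \<or>
          (r < t \<and> - int (p r) + 1 \<le> int si - int (p t) - y \<and> int si - int (p t) - y \<le> int (p r))"
    proof (cases "sj < p r")
      case sjL: True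
      then have yv: "y = int sj" by (simp add: y_def)
      show ?thesis
      proof (cases "si < p t")
        case siL: True
        have "sj * (\<sigma> + 1) + (\<sigma> - r) \<le> si * (\<sigma> + 1) + (\<sigma> - t)"
          using k sjL siL by (simp add: key_def i' j')
        then have lk: "sj \<le> si \<and> (sj = si \<longrightarrow> \<sigma> - r \<le> \<sigma> - t)"
          using lex_key[of sj "\<sigma> + 1" "\<sigma> - r" si "\<sigma> - t"] by auto
        have ne2: "sj = si \<Longrightarrow> t < r" using lk ne i' j' tr by auto
        consider "sj < si" | "sj = si" using lk by linarith
        then show ?thesis
        proof cases
          case 1
          then show ?thesis using yv siL sjL m1' m2' pt pr by (cases "t < r"; cases "t = r"; auto)
        next
          case 2
          then show ?thesis using yv siL sjL ne2 m1' pt by auto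
        qed
      next
        case siU: False
        show ?thesis using yv siU sjL si sj m1' m2' pt pr by (cases "t < r"; cases "t = r"; auto)
      qed
    next
      case sjU: False
      then have yv: "y = int sj - 2 * int (p r)" by (simp add: y_def)
      show ?thesis
      proof (cases "si < p t")
        case siL: True
        have "si * (\<sigma> + 1) + (\<sigma> - t) < (si + 1) * (\<sigma> + 1)" by simp
        also have "\<dots> \<le> PP * (\<sigma> + 1)" using siL pt by (intro mult_le_mono1) simp
        finally have "key i < key j" using siL sjU by (simp add: key_def i' j')
        then show ?thesis using k by simp
      next
        case siU: False
        have "(PP - (sj - p r)) * (\<sigma> + 1) + r \<le> (PP - (si - p t)) * (\<sigma> + 1) + t"
          using k sjU siU by (simp add: key_def i' j')
        then have lk: "PP - (sj - p r) \<le> PP - (si - p t) \<and> (PP - (sj - p r) = PP - (si - p t) \<longrightarrow> r \<le> t)"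
          using lex_key[of "PP - (sj - p r)" "\<sigma> + 1" r "PP - (si - p t)" t] tr by auto
        have a1: "si - p t \<le> sj - p r" using lk si sj pt pr by linarith
        have a2: "si - p t = sj - p r \<Longrightarrow> r < t"
          using lk ne i' j' si sj siU sjU by (cases "r = t") auto
        have a1': "int si - int (p t) \<le> int sj - int (p r)" using a1 siU sjU by linarith
        consider "si - p t < sj - p r" | "si - p t = sj - p r" using a1 by linarith
        then show ?thesis
        proof cases
          case 1
          then have "int si - int (p t) < int sj - int (p r)" using siU sjU by linarith
          then show ?thesis using yv siU sjU si sj m1' m2' pt pr by (cases "t < r"; cases "t = r"; auto)
        next
          case 2
          then have "int si - int (p t) = int sj - int (p r)" using siU sjU by linarith
          then show ?thesis using yv a2[OF 2] pt pr by auto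
        qed
      qed
    qed
  qed
  finally show ?thesis .
qed

lemma tri_diag:
  assumes j: "j \<in> Iset"
  shows "B (ee j) (ee (pim j)) \<noteq> 0"
proof -
  obtain r sj where j': "j = (r, sj)" by (cases j)
  have r: "r \<in> {1..\<sigma>}" and sj: "sj < 2 * p r" using j j' by (auto simp: Iset_def)
  show ?thesis
  proof (cases "sj < p r")
    case True
    have "B (ee j) (ee (pim j)) = B (gpow g (int sj - int (p r) - int sj) (v r)) (v r)"
      using e_pim[OF j] True by (simp add: j' ee_def e_def Bpair)
    also have "\<dots> = 1" using D1[OF r] by simp
    finally show ?thesis by simp
  next
    case False
    have "B (ee j) (ee (pim j)) = B (gpow g (int sj - int (p r) - (int sj - 2 * int (p r))) (v r)) (v r)"
      using e_pim[OF j] False by (simp add: j' ee_def e_def Bpair)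
    also have "\<dots> = \<epsilon>" using D2[OF r] by simp
    finally show ?thesis using eps_nz by simp
  qed
qed

end



context setting begin

lemma ND_coef:
  assumes J: "J \<subseteq> Iset" and cl: "\<And>j. j \<in> J \<Longrightarrow> pim j \<in> J"
    and eqs: "\<And>j. j \<in> J \<Longrightarrow> (\<Sum>i\<in>J. c i * B (ee i) (ee (pim j))) = 0"
  shows "\<forall>i\<in>J. c i = 0"
proof (rule tri_zero[where M = "\<lambda>i j. B (ee i) (ee (pim j))" and key = key])
  show "finite J" using J Iset_fin finite_subset by auto
  show "\<And>j. j \<in> J \<Longrightarrow> B (ee j) (ee (pim j)) \<noteq> 0" using J tri_diag by auto
  show "\<And>i j. i \<in> J \<Longrightarrow> j \<in> J \<Longrightarrow> i \<noteq> j \<Longrightarrow> key j \<le> key i \<Longrightarrow> B (ee i) (ee (pim j)) = 0"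
    using J by (blast intro: tri_low)
  show "\<And>j. j \<in> J \<Longrightarrow> (\<Sum>i\<in>J. c i * B (ee i) (ee (pim j))) = 0" by (rule eqs)
qed

lemma ND:
  assumes J: "J \<subseteq> Iset" and cl: "\<And>j. j \<in> J \<Longrightarrow> pim j \<in> J"
    and x: "x \<in> fd.span (ee ` J)" and orth: "\<And>j. j \<in> J \<Longrightarrow> B x (ee (pim j)) = 0"
  shows "x = 0"
proof -
  have fJ: "finite J" using J Iset_fin finite_subset by auto
  obtain c where c: "x = (\<Sum>i\<in>J. scale (c i) (ee i))" using fd.span_image_repr[OF fJ x] by blast
  have "\<forall>i\<in>J. c i = 0"
  proof (rule ND_coef[OF J cl])
    fix j assume "j \<in> J"
    then show "(\<Sum>i\<in>J. c i * B (ee i) (ee (pim j))) = 0"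
      using orth[of j] Bsum1[of c ee J "ee (pim j)"] c by simp
  qed
  then show ?thesis using c by simp
qed

lemma ee_inj: "inj_on ee Iset"
proof (rule inj_onI, rule ccontr)
  fix a b assume a: "a \<in> Iset" and b: "b \<in> Iset" and eq: "ee a = ee b" and ne: "a \<noteq> b"
  define c where "c i = (if i = a then 1 else if i = b then -1 else (0::'k))" for i
  have "\<forall>i\<in>Iset. c i = 0"
  proof (rule ND_coef)
    fix j assume j: "j \<in> Iset"
    have "(\<Sum>i\<in>Iset. c i * B (ee i) (ee (pim j)))
        = (\<Sum>i\<in>Iset. (if i = a then B (ee a) (ee (pim j)) else 0) + (if i = b then - B (ee b) (ee (pim j)) else 0))"
      by (rule sum.cong) (use ne in \<open>auto simp: c_def\<close>)
    also have "\<dots> = B (ee a) (ee (pim j)) - B (ee b) (ee (pim j))"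
      using a b Iset_fin by (simp add: sum.distrib)
    also have "\<dots> = 0" using eq by simp
    finally show "(\<Sum>i\<in>Iset. c i * B (ee i) (ee (pim j))) = 0" .
  qed (auto simp: pim_in)
  then have "c a = 0" using a by blast
  then show False by (simp add: c_def)
qed

lemma ee_indep: "fd.independent (ee ` Iset)"
proof (rule fd.independent_if_scalars_zero)
  show "finite (ee ` Iset)" using Iset_fin by simp
  fix f x assume s: "(\<Sum>x\<in>ee ` Iset. scale (f x) x) = 0" and x: "x \<in> ee ` Iset"
  have "(\<Sum>x\<in>ee ` Iset. scale (f x) x) = (\<Sum>i\<in>Iset. scale (f (ee i)) (ee i))"
    by (simp add: sum.reindex[OF ee_inj])
  then have s': "(\<Sum>i\<in>Iset. scale (f (ee i)) (ee i)) = 0" using s by simp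
  have "\<forall>i\<in>Iset. f (ee i) = 0"
  proof (rule ND_coef)
    fix j assume "j \<in> Iset"
    show "(\<Sum>i\<in>Iset. f (ee i) * B (ee i) (ee (pim j))) = 0"
      using Bsum1[of "\<lambda>i. f (ee i)" ee Iset "ee (pim j)"] s' by simp
  qed (auto simp: pim_in)
  then show "f x = 0" using x by auto
qed

lemma card_Iset: "card Iset = 2 * PP"
  by (simp add: Iset_def PP_def sum_distrib_left)

definition Nm :: "'v \<Rightarrow> 'v" where "Nm x = g x - x"

lemma Nm_add: "Nm (x + y) = Nm x + Nm y" by (simp add: Nm_def gadd algebra_simps)
lemma Nm_sc: "Nm (scale c x) = scale c (Nm x)" by (simp add: Nm_def gsc fd.scale_right_diff_distrib)

lemma gch_in: "(g ^^ m) x0 \<in> fd.span {(Nm ^^ l) x0 | l. l \<le> m}"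
proof (induction m)
  case 0 show ?case by (rule fd.span_base) auto
next
  case (Suc m)
  have sub: "g ` {(Nm ^^ l) x0 | l. l \<le> m} \<subseteq> fd.span {(Nm ^^ l) x0 | l. l \<le> Suc m}"
  proof
    fix z assume "z \<in> g ` {(Nm ^^ l) x0 | l. l \<le> m}"
    then obtain l where l: "l \<le> m" "z = g ((Nm ^^ l) x0)" by auto
    have z: "z = (Nm ^^ Suc l) x0 + (Nm ^^ l) x0" using l by (simp add: Nm_def)
    have "(Nm ^^ Suc l) x0 \<in> {(Nm ^^ l) x0 | l. l \<le> Suc m}" using l by blast
    then have "(Nm ^^ Suc l) x0 \<in> fd.span {(Nm ^^ l) x0 | l. l \<le> Suc m}" by (rule fd.span_base)
    moreover have "(Nm ^^ l) x0 \<in> fd.span {(Nm ^^ l) x0 | l. l \<le> Suc m}"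
      by (rule fd.span_base) (use l in auto)
    ultimately show "z \<in> fd.span {(Nm ^^ l) x0 | l. l \<le> Suc m}" using z fd.span_add by simp
  qed
  have "g ((g ^^ m) x0) \<in> fd.span {(Nm ^^ l) x0 | l. l \<le> Suc m}"
    by (rule fd.span_map[OF gadd gsc sub Suc.IH])
  then show ?case by simp
qed

lemma Nch_in: "(Nm ^^ m) x0 \<in> fd.span {(g ^^ l) x0 | l. l \<le> m}"
proof (induction m)
  case 0 show ?case by (rule fd.span_base) auto
next
  case (Suc m)
  have sub: "Nm ` {(g ^^ l) x0 | l. l \<le> m} \<subseteq> fd.span {(g ^^ l) x0 | l. l \<le> Suc m}"
  proof
    fix z assume "z \<in> Nm ` {(g ^^ l) x0 | l. l \<le> m}"
    then obtain l where l: "l \<le> m" "z = Nm ((g ^^ l) x0)" by auto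
    have z: "z = (g ^^ Suc l) x0 - (g ^^ l) x0" using l by (simp add: Nm_def)
    have "(g ^^ Suc l) x0 \<in> {(g ^^ l) x0 | l. l \<le> Suc m}" using l by blast
    then have "(g ^^ Suc l) x0 \<in> fd.span {(g ^^ l) x0 | l. l \<le> Suc m}" by (rule fd.span_base)
    moreover have "(g ^^ l) x0 \<in> fd.span {(g ^^ l) x0 | l. l \<le> Suc m}"
      by (rule fd.span_base) (use l in auto)
    ultimately show "z \<in> fd.span {(g ^^ l) x0 | l. l \<le> Suc m}" using z fd.span_diff by simp
  qed
  have "Nm ((Nm ^^ m) x0) \<in> fd.span {(g ^^ l) x0 | l. l \<le> Suc m}"
    by (rule fd.span_map[OF Nm_add Nm_sc sub Suc.IH])
  then show ?case by simp
qed

lemma g_e: "(g ^^ l) (e t 0) = e t l"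
  by (simp add: e_def gpow_funpow gpow_add[symmetric])

definition Xr :: "nat \<Rightarrow> 'v set" where "Xr t = fd.span (e t ` {..<2 * p t})"

lemma e_Xr: "s < 2 * p t \<Longrightarrow> e t s \<in> Xr t"
  unfolding Xr_def by (rule fd.span_base) auto

lemma Nc_X: assumes "s < 2 * p t" shows "(Nm ^^ s) (e t 0) \<in> Xr t"
proof -
  have "{(g ^^ l) (e t 0) | l. l \<le> s} \<subseteq> fd.span (e t ` {..<2 * p t})"
    using assms by (auto simp: g_e intro!: fd.span_base)
  then have "fd.span {(g ^^ l) (e t 0) | l. l \<le> s} \<subseteq> Xr t"
    unfolding Xr_def by (rule fd.span_subset_span)
  then show ?thesis using Nch_in by blast
qed

definition NcI :: "nat \<times> nat \<Rightarrow> 'v" where "NcI j = (Nm ^^ snd j) (e (fst j) 0)"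

lemma Xr_sub: "t \<in> {1..\<sigma>} \<Longrightarrow> Xr t \<subseteq> fd.span (ee ` Iset)"
  unfolding Xr_def
  by (rule fd.span_mono) (force simp: ee_def Iset_def)

lemma span_Nc: "fd.span (NcI ` Iset) = fd.span (ee ` Iset)"
proof
  show "fd.span (NcI ` Iset) \<subseteq> fd.span (ee ` Iset)"
  proof (rule fd.span_subset_span, safe)
    fix t s assume "(t, s) \<in> Iset"
    then have "t \<in> {1..\<sigma>}" "s < 2 * p t" by (auto simp: Iset_def)
    then show "NcI (t, s) \<in> fd.span (ee ` Iset)" using Nc_X Xr_sub by (auto simp: NcI_def)
  qed
  show "fd.span (ee ` Iset) \<subseteq> fd.span (NcI ` Iset)"
  proof (rule fd.span_subset_span, safe)
    fix t s assume ts: "(t, s) \<in> Iset"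
    then have t: "t \<in> {1..\<sigma>}" and s: "s < 2 * p t" by (auto simp: Iset_def)
    have "{(Nm ^^ l) (e t 0) | l. l \<le> s} \<subseteq> fd.span (NcI ` Iset)"
    proof
      fix z assume "z \<in> {(Nm ^^ l) (e t 0) | l. l \<le> s}"
      then obtain l where l: "l \<le> s" "z = (Nm ^^ l) (e t 0)" by auto
      then have "(t, l) \<in> Iset" using t s by (auto simp: Iset_def)
      moreover have "z = NcI (t, l)" using l by (simp add: NcI_def)
      ultimately show "z \<in> fd.span (NcI ` Iset)" by (auto intro!: fd.span_base)
    qed
    then have "fd.span {(Nm ^^ l) (e t 0) | l. l \<le> s} \<subseteq> fd.span (NcI ` Iset)"
      by (rule fd.span_subset_span)
    then show "ee (t, s) \<in> fd.span (NcI ` Iset)" using gch_in[of s "e t 0"] by (auto simp: ee_def g_e)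
  qed
qed

lemma dim_E: "fd.dim (fd.span (ee ` Iset)) = card Iset"
  using fd.dim_span_eq_card_independent[OF ee_indep] card_image[OF ee_inj] by simp

lemma Nc_indep: "fd.independent (NcI ` Iset)" and Nc_inj: "inj_on NcI Iset"
proof -
  have c1: "card (NcI ` Iset) \<le> card Iset" using card_image_le[OF Iset_fin] by simp
  show ind: "fd.independent (NcI ` Iset)"
  proof (rule fd.card_le_dim_spanning[where V = "fd.span (ee ` Iset)"])
    show "NcI ` Iset \<subseteq> fd.span (ee ` Iset)" using span_Nc fd.span_superset by blast
    show "fd.span (ee ` Iset) \<subseteq> fd.span (NcI ` Iset)" using span_Nc by simp
    show "finite (NcI ` Iset)" using Iset_fin by simp
    show "card (NcI ` Iset) \<le> fd.dim (fd.span (ee ` Iset))" using c1 dim_E by simp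
  qed
  have "card (NcI ` Iset) = card Iset"
    using fd.dim_span_eq_card_independent[OF ind] span_Nc dim_E by simp
  then show "inj_on NcI Iset" using eq_card_imp_inj_on[OF Iset_fin] by blast
qed

definition Fk :: "nat \<Rightarrow> 'v set" where "Fk k = NcI ` {j \<in> Iset. k \<le> snd j}"

lemma Fk_indep: "fd.independent (Fk k)"
  by (rule fd.independent_mono[OF Nc_indep]) (auto simp: Fk_def)

lemma Fk_card: "card (Fk k) = (\<Sum>t\<in>{1..\<sigma>}. 2 * p t - k)"
proof -
  have inj: "inj_on NcI {j \<in> Iset. k \<le> snd j}" by (rule inj_on_subset[OF Nc_inj]) auto
  have eq: "{j \<in> Iset. k \<le> snd j} = Sigma {1..\<sigma>} (\<lambda>t. {k..<2 * p t})" by (auto simp: Iset_def)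
  have "card (Fk k) = card {j \<in> Iset. k \<le> snd j}" unfolding Fk_def by (rule card_image[OF inj])
  also have "\<dots> = (\<Sum>t\<in>{1..\<sigma>}. 2 * p t - k)" unfolding eq by simp
  finally show ?thesis .
qed

lemma Fk_range: "Fk k \<subseteq> range (Nm ^^ k)"
proof
  fix z assume "z \<in> Fk k"
  then obtain t s where ts: "k \<le> s" "z = (Nm ^^ s) (e t 0)" by (auto simp: Fk_def NcI_def)
  have "Nm ^^ s = (Nm ^^ k) \<circ> (Nm ^^ (s - k))" using ts(1) funpow_add[of k "s - k" Nm] by simp
  then show "z \<in> range (Nm ^^ k)" using ts by auto
qed

lemma part2: "(\<Sum>t\<in>{1..\<sigma>}. 2 * p t - k) \<le> fd.dim (range (Nm ^^ k))"
  using fd.independent_card_le_dim[OF Fk_range Fk_indep] Fk_card by simp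

lemma range_Fk:
  assumes "fd.dim (range (Nm ^^ k)) \<le> (\<Sum>t\<in>{1..\<sigma>}. 2 * p t - k)"
  shows "range (Nm ^^ k) \<subseteq> fd.span (Fk k)"
  by (rule fd.card_ge_dim_independent[OF Fk_range Fk_indep]) (use assms Fk_card in simp)

end



context setting begin

definition Jr :: "nat \<Rightarrow> (nat \<times> nat) set" where "Jr r = {r} \<times> {..<2 * p r}"

lemma Jr_sub: "r \<in> {1..\<sigma>} \<Longrightarrow> Jr r \<subseteq> Iset" by (auto simp: Jr_def Iset_def)
lemma Jr_cl: "j \<in> Jr r \<Longrightarrow> pim j \<in> Jr r" by (auto simp: Jr_def pim_def)
lemma Jr_fin: "finite (Jr r)" by (simp add: Jr_def)

lemma e_ee: "e r ` {..<2 * p r} = ee ` Jr r" by (force simp: Jr_def ee_def)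

lemma Xr_ee: "Xr r = fd.span (ee ` Jr r)" by (simp add: Xr_def e_ee)

lemma perp_sub: "fd.subspace (perp B S)"
  unfolding fd.subspace_def perp_def by (auto simp: Badd1 Bsc1)

lemma snd_pim_lt: "j \<in> Iset \<Longrightarrow> snd (pim j) < 2 * p (fst j)"
  by (auto simp: Iset_def pim_def)

lemma Xr_sub_sp: "fd.subspace (Xr r)" by (simp add: Xr_def)

lemma Xr_inter: assumes r: "r \<in> {1..\<sigma>}" shows "Xr r \<inter> perp B (Xr r) = {0}"
proof
  show "Xr r \<inter> perp B (Xr r) \<subseteq> {0}"
  proof
    fix x assume x: "x \<in> Xr r \<inter> perp B (Xr r)"
    have "x = 0"
    proof (rule ND[OF Jr_sub[OF r] Jr_cl])
      show "x \<in> fd.span (ee ` Jr r)" using x Xr_ee by auto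
      fix j assume "j \<in> Jr r"
      then have "pim j \<in> Jr r" by (rule Jr_cl)
      then have "ee (pim j) \<in> Xr r" unfolding Xr_ee by (auto intro: fd.span_base)
      then show "B x (ee (pim j)) = 0" using x by (auto simp: perp_def)
    qed
    then show "x \<in> {0}" by simp
  qed
  show "{0} \<subseteq> Xr r \<inter> perp B (Xr r)" using fd.span_zero by (auto simp: Xr_def perp_def)
qed

lemma perp_dim: "finite S \<Longrightarrow> fd.dim (UNIV::'v set) \<le> fd.dim (perp B S) + card S"
proof (induction S rule: finite_induct)
  case empty then show ?case by (simp add: perp_def)
next
  case (insert a S)
  let ?U = "perp B S" and ?W = "perp B (insert a S)"
  have W: "?W = ?U \<inter> {x. B x a = 0}" by (auto simp: perp_def)
  have "fd.dim ?U \<le> fd.dim ?W + 1"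
  proof (cases "\<exists>u0\<in>?U. B u0 a \<noteq> 0")
    case False then have "?W = ?U" using W by auto
    then show ?thesis by simp
  next
    case True
    then obtain u0 where u0: "u0 \<in> ?U" "B u0 a \<noteq> 0" by blast
    have "?U \<subseteq> fd.span (insert u0 ?W)"
    proof
      fix x assume x: "x \<in> ?U"
      define c where "c = B x a / B u0 a"
      have "x - scale c u0 \<in> ?U"
        using x u0 perp_sub[of S] fd.subspace_diff fd.subspace_scale by blast
      moreover have "B (x - scale c u0) a = 0" using u0 by (simp add: Bdiff1 Bsc1 c_def)
      ultimately have w: "x - scale c u0 \<in> ?W" using W by auto
      have "x = (x - scale c u0) + scale c u0" by simp
      then show "x \<in> fd.span (insert u0 ?W)" using w
        by (metis fd.span_add fd.span_base fd.span_scale insertI1 insertI2)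
    qed
    then have "fd.dim ?U \<le> fd.dim (insert u0 ?W)" by (rule fd.dim_mono)
    also have "\<dots> \<le> fd.dim ?W + 1" by (simp add: fd.dim_insert)
    finally show ?thesis .
  qed
  then show ?case using insert by simp
qed

lemma Xr_dim: assumes r: "r \<in> {1..\<sigma>}" shows "fd.dim (Xr r) = 2 * p r"
proof -
  have ind: "fd.independent (ee ` Jr r)"
    by (rule fd.independent_mono[OF ee_indep]) (use Jr_sub[OF r] in auto)
  have "card (ee ` Jr r) = card (Jr r)"
    by (rule card_image[OF inj_on_subset[OF ee_inj Jr_sub[OF r]]])
  then show ?thesis using fd.dim_span_eq_card_independent[OF ind] by (simp add: Xr_ee Jr_def)
qed

lemma Xr_perp_eq: "perp B (Xr r) = perp B (ee ` Jr r)"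
proof
  show "perp B (Xr r) \<subseteq> perp B (ee ` Jr r)"
    unfolding Xr_ee perp_def using fd.span_base by blast
  show "perp B (ee ` Jr r) \<subseteq> perp B (Xr r)"
    unfolding Xr_ee perp_def
  proof safe
    fix x y assume "\<forall>y\<in>ee ` Jr r. B x y = 0" "y \<in> fd.span (ee ` Jr r)"
    then show "B x y = 0" using perp_span2 by blast
  qed
qed

lemma Xr_sum: assumes r: "r \<in> {1..\<sigma>}"
  shows "{x + y | x y. x \<in> Xr r \<and> y \<in> perp B (Xr r)} = UNIV"
proof -
  let ?X = "Xr r" and ?P = "perp B (Xr r)"
  let ?S = "{x + y | x y. x \<in> ?X \<and> y \<in> ?P}"
  have sX: "fd.subspace ?X" by (rule Xr_sub_sp)
  have sP: "fd.subspace ?P" by (rule perp_sub)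
  have eq: "fd.dim ?S + fd.dim (?X \<inter> ?P) = fd.dim ?X + fd.dim ?P" by (rule fd.dim_sums_Int[OF sX sP])
  have z: "fd.dim (?X \<inter> ?P) = 0" using Xr_inter[OF r] by simp
  have d: "fd.dim (UNIV::'v set) \<le> fd.dim ?P + 2 * p r"
  proof -
    have "fd.dim (UNIV::'v set) \<le> fd.dim (perp B (ee ` Jr r)) + card (ee ` Jr r)"
      by (rule perp_dim) (simp add: Jr_fin)
    moreover have "card (ee ` Jr r) \<le> 2 * p r" using card_image_le[OF Jr_fin, of ee] by (simp add: Jr_def)
    ultimately show ?thesis using Xr_perp_eq[of r] by simp
  qed
  have "fd.dim (UNIV::'v set) \<le> fd.dim ?S" using eq z d Xr_dim[OF r] by simp
  then show ?thesis using fd.subspace_dim_equal[of ?S UNIV] fd.subspace_sums[OF sX sP] by auto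
qed

lemma stable_inv:
  assumes W: "W = fd.span S" and st: "g ` W \<subseteq> W"
  shows "inv g ` W \<subseteq> W"
proof
  fix x assume x: "x \<in> inv g ` W"
  then obtain w where w: "w \<in> W" "x = inv g w" by auto
  obtain Bs where Bs: "Bs \<subseteq> W" "fd.independent Bs" "W \<subseteq> fd.span Bs" "card Bs = fd.dim W"
    using fd.basis_exists by blast
  have injg: "inj g" using gbij bij_is_inj by blast
  have ind: "fd.independent (g ` Bs)"
  proof
    assume "fd.dependent (g ` Bs)"
    then have "fd.dependent Bs" using gh.dependent_inj_imageD inj_on_subset[OF injg] by blast
    then show False using Bs by simp
  qed
  have cg: "card (g ` Bs) = card Bs" using card_image inj_on_subset[OF injg] by blast
  have "W \<subseteq> fd.span (g ` Bs)"
    by (rule fd.card_ge_dim_independent) (use Bs st ind cg in auto)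
  also have "fd.span (g ` Bs) = g ` fd.span Bs" by (rule gh.span_image)
  finally obtain y where y: "y \<in> fd.span Bs" "w = g y" using w by auto
  have "fd.span Bs \<subseteq> W" using Bs(1) W fd.span_minimal fd.subspace_span by blast
  then show "x \<in> W" using y w inv_g by auto
qed

lemma gpow_stable:
  assumes st: "g ` W \<subseteq> W" and sti: "inv g ` W \<subseteq> W" and x: "x \<in> W"
  shows "gpow g i x \<in> W"
proof (induction i rule: int_induct[where k = 0])
  case base then show ?case using x by simp
next
  case (step1 i) then show ?case using st by (auto simp: gpow_succ)
next
  case (step2 i) then show ?case using sti by (auto simp: gpow_pred)
qed

definition Nmi :: "'v \<Rightarrow> 'v" where "Nmi z = inv g z - z"

lemma Badj: "B (Nm x) z = B x (Nmi z)"
proof -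
  have "B (g x) z = B (g x) (g (inv g z))" by (simp add: g_inv)
  also have "\<dots> = B x (inv g z)" by (rule giso)
  finally show ?thesis by (simp add: Nm_def Nmi_def Bdiff1 Bdiff2)
qed

lemma Badj_pow: "B ((Nm ^^ m) x) z = B x ((Nmi ^^ m) z)"
proof (induction m arbitrary: z)
  case 0 then show ?case by simp
next
  case (Suc m)
  have "B ((Nm ^^ Suc m) x) z = B (Nm ((Nm ^^ m) x)) z" by simp
  also have "\<dots> = B ((Nm ^^ m) x) (Nmi z)" by (rule Badj)
  also have "\<dots> = B x ((Nmi ^^ m) (Nmi z))" by (rule Suc.IH)
  also have "(Nmi ^^ m) (Nmi z) = (Nmi ^^ Suc m) z" by (simp only: funpow_Suc_right o_apply)
  finally show ?case .
qed

lemma Nmi_stable: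
  assumes sub: "fd.subspace W" and sti: "inv g ` W \<subseteq> W" and z: "z \<in> W"
  shows "(Nmi ^^ m) z \<in> W"
proof (induction m)
  case 0 then show ?case using z by simp
next
  case (Suc m)
  then show ?case using sti fd.subspace_diff[OF sub] by (auto simp: Nmi_def)
qed

lemma Xr_orth_gen:
  assumes "\<And>s. s < 2 * p t \<Longrightarrow> B (e t s) u = 0" and "z \<in> Xr t"
  shows "B z u = 0"
  using perp_span1[of "e t ` {..<2 * p t}" u z] assms by (auto simp: Xr_def)

lemma e_orth_v:
  assumes "t \<in> {1..\<sigma>}" "t < r" "r \<le> \<sigma>" "s < 2 * p t"
  shows "B (e t s) (v r) = 0"
  unfolding e_def by (rule v_orth) (use assms in auto)

lemma Xr_orth_v: "t \<in> {1..\<sigma>} \<Longrightarrow> t < r \<Longrightarrow> r \<le> \<sigma> \<Longrightarrow> z \<in> Xr t \<Longrightarrow> B z (v r) = 0"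
  by (rule Xr_orth_gen[where t = t]) (use e_orth_v in auto)

lemma stab:
  assumes H: "\<And>k. 1 \<le> k \<Longrightarrow> fd.dim (range (Nm ^^ k)) \<le> (\<Sum>t\<in>{1..\<sigma>}. 2 * p t - k)"
    and r0: "r \<in> {1..\<sigma>}"
  shows "g ` Xr r \<subseteq> Xr r"
  using r0
proof (induction r rule: less_induct)
  case (less r)
  have r: "r \<in> {1..\<sigma>}" using less.prems .
  have IH: "\<And>t. t \<in> {1..\<sigma>} \<Longrightarrow> t < r \<Longrightarrow> g ` Xr t \<subseteq> Xr t" using less by auto
  define y where "y = (Nm ^^ (2 * p r)) (e r 0)"
  define J where "J = {j \<in> Iset. fst j < r}"
  have J: "J \<subseteq> Iset" by (auto simp: J_def)
  have Jcl: "\<And>j. j \<in> J \<Longrightarrow> pim j \<in> J" by (auto simp: J_def pim_in)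
  have "y \<in> range (Nm ^^ (2 * p r))" by (simp add: y_def)
  also have "\<dots> \<subseteq> fd.span (Fk (2 * p r))" by (rule range_Fk[OF H]) (use p_pos r in auto)
  also have "\<dots> \<subseteq> fd.span (ee ` J)"
  proof (rule fd.span_subset_span, rule subsetI)
    fix z assume "z \<in> Fk (2 * p r)"
    then obtain t s where ts: "(t, s) \<in> Iset" "2 * p r \<le> s" "z = (Nm ^^ s) (e t 0)"
      by (auto simp: Fk_def NcI_def)
    have t: "t \<in> {1..\<sigma>}" "s < 2 * p t" using ts by (auto simp: Iset_def)
    have tr: "t < r"
    proof (rule ccontr)
      assume "\<not> t < r"
      then have "p t \<le> p r" using p_mono[of r t] r t by auto
      then show False using ts t by auto
    qed
    have "z \<in> Xr t" using Nc_X[OF t(2)] ts by simp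
    also have "Xr t \<subseteq> fd.span (ee ` J)" unfolding Xr_def
      by (rule fd.span_mono) (use tr t in \<open>force simp: J_def Iset_def ee_def\<close>)
    finally show "z \<in> fd.span (ee ` J)" .
  qed
  finally have yJ: "y \<in> fd.span (ee ` J)" .
  have orth: "B y z = 0" if t: "t \<in> {1..\<sigma>}" "t < r" and z: "z \<in> Xr t" for t z
  proof -
    have st: "g ` Xr t \<subseteq> Xr t" using IH t by auto
    have sti: "inv g ` Xr t \<subseteq> Xr t" by (rule stable_inv[OF Xr_def st])
    define z1 where "z1 = (Nmi ^^ (2 * p r)) z"
    have z1: "z1 \<in> Xr t" unfolding z1_def by (rule Nmi_stable[OF Xr_sub_sp sti z])
    define z2 where "z2 = gpow g (int (p r)) z1"
    have z2: "z2 \<in> Xr t" unfolding z2_def by (rule gpow_stable[OF st sti z1])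
    have "B y z = B (e r 0) z1" by (simp add: y_def z1_def Badj_pow)
    also have "\<dots> = B (gpow g (int (p r)) (e r 0)) z2" by (simp add: z2_def gpow_iso)
    also have "gpow g (int (p r)) (e r 0) = v r" by (simp add: e_def gpow_add[symmetric])
    also have "B (v r) z2 = \<epsilon> * B z2 (v r)" by (rule Bsym)
    also have "B z2 (v r) = 0" by (rule Xr_orth_v) (use t r z2 in auto)
    finally show ?thesis by simp
  qed
  have y0: "y = 0"
  proof (rule ND[OF J Jcl yJ])
    fix j assume j: "j \<in> J"
    then have jI: "j \<in> Iset" and jr: "fst j < r" by (auto simp: J_def)
    have "ee (pim j) \<in> Xr (fst j)" using snd_pim_lt[OF jI] by (simp add: ee_def e_Xr)
    moreover have "fst j \<in> {1..\<sigma>}" using jI by (auto simp: Iset_def)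
    ultimately show "B y (ee (pim j)) = 0" using orth jr by blast
  qed
  have gen0: "g (e r s) \<in> Xr r" if s: "s < 2 * p r" for s
    proof (cases "Suc s < 2 * p r")
      case True
      have "g (e r s) = e r (Suc s)" using g_e[of "Suc s" r] g_e[of s r] by simp
      then show ?thesis using e_Xr True by simp
    next
      case False
      then have ss: "Suc s = 2 * p r" using s by simp
      have "g (e r s) = (g ^^ (2 * p r)) (e r 0)" using g_e[of s r] ss by (metis funpow.simps(2) o_apply)
      also have "\<dots> \<in> fd.span {(Nm ^^ l) (e r 0) | l. l \<le> 2 * p r}" by (rule gch_in)
      also have "\<dots> \<subseteq> Xr r"
      proof (rule fd.span_minimal[OF _ Xr_sub_sp], rule subsetI)
        fix z assume "z \<in> {(Nm ^^ l) (e r 0) | l. l \<le> 2 * p r}"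
        then obtain l where l: "l \<le> 2 * p r" "z = (Nm ^^ l) (e r 0)" by auto
        show "z \<in> Xr r"
        proof (cases "l < 2 * p r")
          case True then show ?thesis using Nc_X l by simp
        next
          case False then have "z = y" using l by (simp add: y_def)
          then show ?thesis using y0 fd.span_zero by (simp add: Xr_def)
        qed
      qed
      finally show ?thesis .
    qed
  have gen: "g ` (e r ` {..<2 * p r}) \<subseteq> Xr r" using gen0 by auto
  show "g ` Xr r \<subseteq> Xr r"
  proof
    fix x assume "x \<in> g ` Xr r"
    then obtain x0 where x0: "x0 \<in> Xr r" "x = g x0" by auto
    have "g x0 \<in> fd.span (e r ` {..<2 * p r})"
      by (rule fd.span_map[OF gadd gsc]) (use gen x0 in \<open>auto simp: Xr_def\<close>)
    then show "x \<in> Xr r" using x0 by (simp add: Xr_def)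
  qed
qed

lemma orth_blocks:
  assumes st: "\<And>t. t \<in> {1..\<sigma>} \<Longrightarrow> g ` Xr t \<subseteq> Xr t"
    and t: "t \<in> {1..\<sigma>}" and r: "r \<in> {1..\<sigma>}" and tr: "t < r"
    and x: "x \<in> Xr t" and y: "y \<in> Xr r"
  shows "B x y = 0"
proof -
  have stt: "g ` Xr t \<subseteq> Xr t" using st t by auto
  have sti: "inv g ` Xr t \<subseteq> Xr t" by (rule stable_inv[OF Xr_def stt])
  have vt: "v t \<in> Xr t"
  proof -
    have "e t (p t) \<in> Xr t" using p_pos[OF t] by (intro e_Xr) simp
    then show ?thesis by (simp add: e_def)
  qed
  have gen: "B (e t a) (e r b) = 0" if "a < 2 * p t" for a b
  proof -
    have "B (e t a) (e r b) = B (gpow g ((int a - int (p t)) - (int b - int (p r))) (v t)) (v r)"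
      by (simp add: e_def Bpair)
    also have "\<dots> = 0"
      by (rule Xr_orth_v) (use t r tr gpow_stable[OF stt sti vt] in auto)
    finally show ?thesis .
  qed
  have "B (e t a) y = 0" if "a < 2 * p t" for a
    using perp_span2[of "e r ` {..<2 * p r}" "e t a" y] gen[OF that] y by (auto simp: Xr_def)
  then show ?thesis using perp_span1[of "e t ` {..<2 * p t}" y x] x by (auto simp: Xr_def)
qed

lemma last_fixed:
  assumes H1: "fd.dim (range (Nm ^^ 1)) \<le> (\<Sum>t\<in>{1..\<sigma>}. 2 * p t - 1)"
    and st: "\<And>t. t \<in> {1..\<sigma>} \<Longrightarrow> g ` Xr t \<subseteq> Xr t"
    and w: "\<And>t s. t \<in> {1..\<sigma>} \<Longrightarrow> s < 2 * p t \<Longrightarrow> B (e t s) u = 0"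
  shows "g u = u"
proof -
  define y where "y = Nm u"
  have "y \<in> range (Nm ^^ 1)" by (simp add: y_def)
  also have "\<dots> \<subseteq> fd.span (Fk 1)" by (rule range_Fk[OF H1])
  also have "\<dots> \<subseteq> fd.span (NcI ` Iset)" by (rule fd.span_mono) (auto simp: Fk_def)
  also have "\<dots> = fd.span (ee ` Iset)" by (rule span_Nc)
  finally have yI: "y \<in> fd.span (ee ` Iset)" .
  have "y = 0"
  proof (rule ND[OF order_refl pim_in yI])
    fix j assume jI: "j \<in> Iset"
    have t: "fst j \<in> {1..\<sigma>}" using jI by (auto simp: Iset_def)
    have z: "ee (pim j) \<in> Xr (fst j)" using snd_pim_lt[OF jI] by (simp add: ee_def e_Xr)
    have stt: "g ` Xr (fst j) \<subseteq> Xr (fst j)" using st t by auto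
    have sti: "inv g ` Xr (fst j) \<subseteq> Xr (fst j)" by (rule stable_inv[OF Xr_def stt])
    have z1: "(Nmi ^^ 1) (ee (pim j)) \<in> Xr (fst j)" by (rule Nmi_stable[OF Xr_sub_sp sti z])
    have "B y (ee (pim j)) = B u ((Nmi ^^ 1) (ee (pim j)))" using Badj_pow[of 1 u] by (simp add: y_def)
    also have "\<dots> = \<epsilon> * B ((Nmi ^^ 1) (ee (pim j))) u" by (rule Bsym)
    also have "B ((Nmi ^^ 1) (ee (pim j))) u = 0" by (rule Xr_orth_gen[OF _ z1]) (use w t in auto)
    finally show "B y (ee (pim j)) = 0" by simp
  qed
  then show ?thesis by (simp add: y_def Nm_def)
qed

end


theorem mainTheorem6:
  fixes scale :: "'k::field \<Rightarrow> 'v::ab_group_add \<Rightarrow> 'v"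
    and B :: "'v \<Rightarrow> 'v \<Rightarrow> 'k" and Q :: "'v \<Rightarrow> 'k"
    and nn \<kappa> n \<sigma> :: nat and p :: "nat \<Rightarrow> nat"
    and V V' :: "nat \<Rightarrow> 'v set" and g :: "'v \<Rightarrow> 'v" and v :: "nat \<Rightarrow> 'v"
  assumes alg_closed: "\<forall>q::'k poly. 0 < degree q \<longrightarrow> (\<exists>x. poly q x = 0)"
    and vs: "vector_space scale"
    and dimV: "vector_space.dim scale (UNIV :: 'v set) = nn"
    and nn3: "3 \<le> nn"
    and kappa: "\<kappa> = nn mod 2"
    and n_def: "n = nn div 2"
    and form: "form_conditions scale B Q"
    and p_pos: "\<forall>r\<in>{1..\<sigma>}. 1 \<le> p r"
    and p_mono: "\<forall>r\<in>{1..\<sigma>}. \<forall>r'\<in>{1..\<sigma>}. r \<le> r' \<longrightarrow> p r' \<le> p r"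
    and p_sum: "(\<Sum>r\<in>{1..\<sigma>}. p r) = n"
    and flagV: "is_flag scale B Q nn V"
    and flagV': "is_flag scale B Q nn V'"
    and relpos: "rel_pos_eq nn V V' (wperm nn p)"
    and g_iso: "isometry scale B Q g"
    and gV: "\<forall>i\<le>nn. g ` V i = V' i"
    and v_span: "\<forall>r\<in>{1..\<sigma>}. \<forall>i\<le>p r. V (plt p r + i) =
        module.span scale ({(g ^^ j) (v t) | t j. 1 \<le> t \<and> t < r \<and> j < p t}
                           \<union> {(g ^^ j) (v r) | j. j < i})"
    and v_orth: "\<forall>t r. 1 \<le> t \<and> t < r \<and> r \<le> \<sigma> \<longrightarrow>
        (\<forall>i::int. - int (p t) \<le> i \<and> i \<le> int (p t) - 1 \<longrightarrow> B (gpow g i (v t)) (v r) = 0)"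
    and v_self: "\<forall>r\<in>{1..\<sigma>}. (\<forall>i::int. \<bar>i\<bar> \<le> int (p r) - 1 \<longrightarrow> B (v r) (gpow g i (v r)) = 0)
        \<and> Q (v r) = 0 \<and> B (v r) ((g ^^ p r) (v r)) = 1"
    and v_last: "\<kappa> = 1 \<longrightarrow>
        (\<forall>t\<in>{1..\<sigma>}. \<forall>i::int. - int (p t) \<le> i \<and> i \<le> int (p t) - 1 \<longrightarrow>
            B (gpow g i (v t)) (v (\<sigma> + 1)) = 0) \<and> Q (v (\<sigma> + 1)) = 1"
  shows
    "(\<forall>r\<in>{1..\<sigma>}.
        {x + y | x y. x \<in> Xsp scale g v p \<sigma> \<kappa> r \<and> y \<in> perp B (Xsp scale g v p \<sigma> \<kappa> r)} = UNIV
      \<and> Xsp scale g v p \<sigma> \<kappa> r \<inter> perp B (Xsp scale g v p \<sigma> \<kappa> r) = {0})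
   \<and> (unipotent g \<longrightarrow>
        (\<forall>k. Lam p \<sigma> \<kappa> k \<le> vector_space.dim scale (range ((\<lambda>x. g x - x) ^^ k)))
      \<and> vector_space.dim scale (range ((\<lambda>x. g x - x) ^^ 0)) = Lam p \<sigma> \<kappa> 0)
   \<and> (unipotent g \<and> (\<forall>k. vector_space.dim scale (range ((\<lambda>x. g x - x) ^^ k)) = Lam p \<sigma> \<kappa> k) \<longrightarrow>
        (\<forall>r\<in>{1..\<sigma>+1}. g ` Xsp scale g v p \<sigma> \<kappa> r \<subseteq> Xsp scale g v p \<sigma> \<kappa> r)
      \<and> (\<forall>r\<in>{1..\<sigma>+1}. \<forall>r'\<in>{1..\<sigma>+1}. r \<noteq> r' \<longrightarrow>
           (\<forall>x\<in>Xsp scale g v p \<sigma> \<kappa> r. \<forall>y\<in>Xsp scale g v p \<sigma> \<kappa> r'. B x y = 0)))"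
proof -
  interpret vs: vector_space scale by (rule vs)
  have d0: "vs.dim (UNIV::'v set) \<noteq> 0" using dimV nn3 by simp
  have ex: "\<exists>b. vs.independent b \<and> vs.span b = vs.span (UNIV::'v set)"
    using d0 unfolding vs.dim_def by (auto split: if_splits)
  define Bas where "Bas = (SOME b. vs.independent b \<and> vs.span b = vs.span (UNIV::'v set))"
  have Bas: "vs.independent Bas \<and> vs.span Bas = vs.span UNIV"
    unfolding Bas_def by (rule someI_ex[OF ex])
  have cB: "card Bas = nn" using dimV ex unfolding vs.dim_def Bas_def by simp
  have fB: "finite Bas" using cB nn3 card.infinite by force
  have fdv: "finite_dimensional_vector_space scale Bas"
    unfolding finite_dimensional_vector_space_def finite_dimensional_vector_space_axioms_def
    using vs Bas fB by simp
  have Badd1: "\<And>x y z. B (x + y) z = B x z + B y z" using form by (simp add: form_conditions_def)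
  have Badd2: "\<And>x y z. B x (y + z) = B x y + B x z" using form by (simp add: form_conditions_def)
  have Bsc1: "\<And>c x y. B (scale c x) y = c * B x y" using form by (simp add: form_conditions_def)
  have Bsc2: "\<And>c x y. B x (scale c y) = c * B x y" using form by (simp add: form_conditions_def)
  obtain \<epsilon> :: 'k where eps: "\<epsilon> = 1 \<or> \<epsilon> = -1" and Bsym: "\<And>x y. B y x = \<epsilon> * B x y"
  proof (cases "\<forall>x. B x x = 0")
    case True
    have BB: "B y x = - 1 * B x y" for x y
    proof -
      have "0 = B (x + y) (x + y)" using True by simp
      also have "\<dots> = B x x + B x y + (B y x + B y y)" by (simp only: Badd1 Badd2) (simp add: ac_simps)
      also have "\<dots> = B x y + B y x" using True by simp
      finally have "B x y + B y x = 0" by simp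
      then have "B y x = - B x y" by (metis add.commute eq_neg_iff_add_eq_0)
      then show ?thesis by simp
    qed
    show ?thesis by (rule that[of "-1"]) (simp, rule BB)
  next
    case False
    have fc: "((\<forall>x. Q x = 0) \<and> (\<forall>x. B x x = 0) \<and> perp B UNIV = {0})
     \<or> ((\<exists>x. Q x \<noteq> 0) \<and> (\<forall>x y. B x y = Q (x + y) - Q x - Q y) \<and> inj_on Q (perp B UNIV))"
      using form unfolding form_conditions_def
      by (rule conjunct2[THEN conjunct2, THEN conjunct2, THEN conjunct2, THEN conjunct2])
    from fc have QB: "\<forall>x y. B x y = Q (x + y) - Q x - Q y"
    proof
      assume "(\<forall>x. Q x = 0) \<and> (\<forall>x. B x x = 0) \<and> perp B UNIV = {0}"
      then show ?thesis using False by blast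
    next
      assume "(\<exists>x. Q x \<noteq> 0) \<and> (\<forall>x y. B x y = Q (x + y) - Q x - Q y) \<and> inj_on Q (perp B UNIV)"
      then show ?thesis by (rule conjunct1[OF conjunct2])
    qed
    have BB: "B y x = 1 * B x y" for x y
    proof -
      have "B y x = Q (y + x) - Q y - Q x" by (rule QB[rule_format])
      also have "\<dots> = Q (x + y) - Q x - Q y" by (simp add: add.commute[of y x] diff_diff_eq add.commute)
      also have "\<dots> = B x y" by (rule QB[rule_format, symmetric])
      finally show ?thesis by (simp only: mult_1)
    qed
    show ?thesis by (rule that[of 1]) (simp, rule BB)
  qed
  have glin: "Vector_Spaces.linear scale scale g" and gbij: "bij g"
    and giso: "\<And>x y. B (g x) (g y) = B x y" using g_iso by (auto simp: isometry_def)
  have set: "setting scale Bas B \<epsilon> g v p \<sigma>"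
  proof (rule setting.intro[OF fdv], rule setting_axioms.intro)
    show "\<And>x y z. B (x + y) z = B x z + B y z" by (rule Badd1)
    show "\<And>x y z. B x (y + z) = B x y + B x z" by (rule Badd2)
    show "\<And>c x y. B (scale c x) y = c * B x y" by (rule Bsc1)
    show "\<And>c x y. B x (scale c y) = c * B x y" by (rule Bsc2)
    show "\<epsilon> = 1 \<or> \<epsilon> = -1" by (rule eps)
    show "\<And>x y. B y x = \<epsilon> * B x y" by (rule Bsym)
    show "Vector_Spaces.linear scale scale g" by (rule glin)
    show "bij g" by (rule gbij)
    show "\<And>x y. B (g x) (g y) = B x y" by (rule giso)
    show "\<And>r. r \<in> {1..\<sigma>} \<Longrightarrow> 1 \<le> p r" using p_pos by blast
    show "\<And>r r'. r \<in> {1..\<sigma>} \<Longrightarrow> r' \<in> {1..\<sigma>} \<Longrightarrow> r \<le> r' \<Longrightarrow> p r' \<le> p r"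
      using p_mono by blast
    show "\<And>t r i. 1 \<le> t \<Longrightarrow> t < r \<Longrightarrow> r \<le> \<sigma> \<Longrightarrow> - int (p t) \<le> i \<Longrightarrow> i \<le> int (p t) - 1
       \<Longrightarrow> B (gpow g i (v t)) (v r) = 0" using v_orth by blast
    show "\<And>r i. r \<in> {1..\<sigma>} \<Longrightarrow> \<bar>i\<bar> \<le> int (p r) - 1 \<Longrightarrow> B (v r) (gpow g i (v r)) = 0"
      using v_self by blast
    show "\<And>r. r \<in> {1..\<sigma>} \<Longrightarrow> B (v r) ((g ^^ p r) (v r)) = 1" using v_self by blast
  qed
  interpret S: setting scale Bas B \<epsilon> g v p \<sigma> by (rule set)

  have Xeq: "Xsp scale g v p \<sigma> \<kappa> r = S.Xr r" if r: "r \<le> \<sigma>" for r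
  proof -
    have "{gpow g (i - int (p r)) (v r) | i. 0 \<le> i \<and> i \<le> 2 * int (p r) - 1} = S.e r ` {..<2 * p r}"
    proof
      show "{gpow g (i - int (p r)) (v r) | i. 0 \<le> i \<and> i \<le> 2 * int (p r) - 1} \<subseteq> S.e r ` {..<2 * p r}"
      proof
        fix x assume "x \<in> {gpow g (i - int (p r)) (v r) | i. 0 \<le> i \<and> i \<le> 2 * int (p r) - 1}"
        then obtain i where i: "0 \<le> i" "i \<le> 2 * int (p r) - 1" "x = gpow g (i - int (p r)) (v r)" by auto
        then have "x = S.e r (nat i)" "nat i < 2 * p r" by (auto simp: S.e_def)
        then show "x \<in> S.e r ` {..<2 * p r}" by auto
      qed
      show "S.e r ` {..<2 * p r} \<subseteq> {gpow g (i - int (p r)) (v r) | i. 0 \<le> i \<and> i \<le> 2 * int (p r) - 1}"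
      proof
        fix x assume "x \<in> S.e r ` {..<2 * p r}"
        then obtain s where s: "s < 2 * p r" "x = S.e r s" by auto
        then show "x \<in> {gpow g (i - int (p r)) (v r) | i. 0 \<le> i \<and> i \<le> 2 * int (p r) - 1}"
          by (intro CollectI exI[of _ "int s"]) (auto simp: S.e_def)
      qed
    qed
    then show ?thesis using r by (simp add: Xsp_def S.Xr_def)
  qed
  have Nmeq: "(\<lambda>x. g x - x) = S.Nm" by (rule ext) (simp add: S.Nm_def)
  have sum_p: "(\<Sum>r\<in>{1..\<sigma>}. 2 * p r) = 2 * n" using p_sum sum_distrib_left[of 2 p "{1..\<sigma>}"] by simp
  have nn_eq: "nn = 2 * n + \<kappa>" using kappa n_def by simp
  have k1: "\<kappa> \<le> 1" using kappa by simp
  have Lam0: "Lam p \<sigma> \<kappa> 0 = nn" using sum_p nn_eq by (simp add: Lam_def)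
  have LamK: "Lam p \<sigma> \<kappa> k = (\<Sum>t\<in>{1..\<sigma>}. 2 * p t - k)" if "1 \<le> k" for k
    using that k1 by (simp add: Lam_def)
  have P1: "\<forall>r\<in>{1..\<sigma>}.
        {x + y | x y. x \<in> Xsp scale g v p \<sigma> \<kappa> r \<and> y \<in> perp B (Xsp scale g v p \<sigma> \<kappa> r)} = UNIV
      \<and> Xsp scale g v p \<sigma> \<kappa> r \<inter> perp B (Xsp scale g v p \<sigma> \<kappa> r) = {0}"
    using Xeq S.Xr_sum S.Xr_inter by auto
  have dim0: "vector_space.dim scale (range ((\<lambda>x. g x - x) ^^ 0)) = Lam p \<sigma> \<kappa> 0"
    using dimV Lam0 by simp
  have P2: "\<forall>k. Lam p \<sigma> \<kappa> k \<le> vector_space.dim scale (range ((\<lambda>x. g x - x) ^^ k))"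
  proof
    fix k show "Lam p \<sigma> \<kappa> k \<le> vector_space.dim scale (range ((\<lambda>x. g x - x) ^^ k))"
    proof (cases "k = 0")
      case True then show ?thesis using dim0 by simp
    next
      case False then show ?thesis using LamK[of k] S.part2[of k] by (simp add: Nmeq)
    qed
  qed
  have P3: "(\<forall>r\<in>{1..\<sigma>+1}. g ` Xsp scale g v p \<sigma> \<kappa> r \<subseteq> Xsp scale g v p \<sigma> \<kappa> r)
      \<and> (\<forall>r\<in>{1..\<sigma>+1}. \<forall>r'\<in>{1..\<sigma>+1}. r \<noteq> r' \<longrightarrow>
           (\<forall>x\<in>Xsp scale g v p \<sigma> \<kappa> r. \<forall>y\<in>Xsp scale g v p \<sigma> \<kappa> r'. B x y = 0))"
    if H: "\<forall>k. vector_space.dim scale (range ((\<lambda>x. g x - x) ^^ k)) = Lam p \<sigma> \<kappa> k"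
  proof -
    have H': "\<And>k. 1 \<le> k \<Longrightarrow> vector_space.dim scale (range (S.Nm ^^ k)) \<le> (\<Sum>t\<in>{1..\<sigma>}. 2 * p t - k)"
      using H LamK by (simp add: Nmeq)
    have st: "\<And>t. t \<in> {1..\<sigma>} \<Longrightarrow> g ` S.Xr t \<subseteq> S.Xr t" using S.stab[OF H'] by blast
    define w where "w = v (\<sigma> + 1)"
    have worth: "\<And>t s. t \<in> {1..\<sigma>} \<Longrightarrow> s < 2 * p t \<Longrightarrow> B (S.e t s) w = 0" if "\<kappa> = 1"
      using v_last that unfolding w_def S.e_def by auto
    have last: "Xsp scale g v p \<sigma> \<kappa> (\<sigma> + 1) = (if \<kappa> = 0 then {0} else {scale c w | c. True})"
      by (simp add: Xsp_def w_def)
    have gw: "g w = w" if "\<kappa> = 1"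
      by (rule S.last_fixed[OF _ st worth[OF that]]) (use H'[of 1] in simp)
    have wX: "B x w = 0" if "\<kappa> = 1" "t \<in> {1..\<sigma>}" "x \<in> S.Xr t" for t x
      by (rule S.Xr_orth_gen[OF _ that(3)]) (use worth[OF that(1)] that(2) in auto)
    have A: "\<forall>r\<in>{1..\<sigma>+1}. g ` Xsp scale g v p \<sigma> \<kappa> r \<subseteq> Xsp scale g v p \<sigma> \<kappa> r"
    proof
      fix r assume r: "r \<in> {1..\<sigma>+1}"
      show "g ` Xsp scale g v p \<sigma> \<kappa> r \<subseteq> Xsp scale g v p \<sigma> \<kappa> r"
      proof (cases "r \<le> \<sigma>")
        case True then show ?thesis using Xeq st r by auto
      next
        case False
        then have rr: "r = \<sigma> + 1" using r by auto
        show ?thesis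
        proof (cases "\<kappa> = 0")
          case True then show ?thesis using rr last S.gh.zero by auto
        next
          case False then have "\<kappa> = 1" using k1 by simp
          then show ?thesis using rr last gw S.gsc by auto
        qed
      qed
    qed
    have Bo: "B x y = 0" if r: "r \<in> {1..\<sigma>+1}" and r': "r' \<in> {1..\<sigma>+1}" and ne: "r \<noteq> r'"
      and x: "x \<in> Xsp scale g v p \<sigma> \<kappa> r" and y: "y \<in> Xsp scale g v p \<sigma> \<kappa> r'" for r r' x y
    proof (cases "r \<le> \<sigma> \<and> r' \<le> \<sigma>")
      case True
      then have x': "x \<in> S.Xr r" and y': "y \<in> S.Xr r'" using Xeq x y by auto
      have rs: "r \<in> {1..\<sigma>}" "r' \<in> {1..\<sigma>}" using True r r' by auto
      show ?thesis
      proof (cases "r < r'")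
        case True then show ?thesis using S.orth_blocks[OF st rs True x' y'] by simp
      next
        case False then have "r' < r" using ne by simp
        then have "B y x = 0" using S.orth_blocks[OF st rs(2) rs(1) _ y' x'] by simp
        then show ?thesis using Bsym[of y x] S.eps_nz by simp
      qed
    next
      case False
      then have cases: "(r = \<sigma> + 1 \<and> r' \<le> \<sigma>) \<or> (r' = \<sigma> + 1 \<and> r \<le> \<sigma>)" using r r' ne by auto
      show ?thesis
      proof (cases "\<kappa> = 0")
        case True
        then show ?thesis using cases x y last by auto
      next
        case False then have k: "\<kappa> = 1" using k1 by simp
        show ?thesis
        proof (cases "r = \<sigma> + 1")
          case True
          then have r'': "r' \<le> \<sigma>" "r' \<in> {1..\<sigma>}" using cases ne r' by auto
          obtain c where c: "x = scale c w" using x True last k by auto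
          have "B y w = 0" using wX[OF k r''(2)] y Xeq[OF r''(1)] by auto
          then have "B w y = 0" using Bsym[of y w] S.eps_nz by simp
          then show ?thesis using c Bsc1 by simp
        next
          case False
          then have r'': "r' = \<sigma> + 1" "r \<in> {1..\<sigma>}" "r \<le> \<sigma>" using cases r by auto
          obtain c where c: "y = scale c w" using y r'' last k by auto
          have "B x w = 0" using wX[OF k r''(2)] x Xeq[OF r''(3)] by auto
          then show ?thesis using c Bsc2 by simp
        qed
      qed
    qed
    show ?thesis using A Bo by blast
  qed
  show ?thesis using P1 P2 dim0 P3 by blast
qed

end
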